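(* Let $X$ be a Banach ideal space over a $\sigma$-finite measure space $(\Omega,\Sigma,\mu)$ with the semi-Fatou property such that $\operatorname{supp}(X_a)=\operatorname{supp}(X)$. Then $X$ contains a lattice isometric copy of $\ell_\infty$ if and only if there exists $f\in X$ with $\|f\|_X=\operatorname{dist}_X(f,X_a)=1$.
   Context: A Banach ideal space $X$ on a complete $\sigma$-finite measure space $(\Omega,\Sigma,\mu)$ is a Banach space $X\subset L_0(\Omega,\Sigma,\mu)$ (real measurable functions modulo a.e. equality) such that if $|f|\le|g|$ a.e., $f\in L_0$ and $g\in X$, then $f\in X$ and $\|f\|_X\le\|g\|_X$. An element $x\in X$ is order continuous if for every sequence $0\le x_n\le|x|$ with $x_n\downarrow 0$ (decreasing with infimum $0$) one has $\|x_n\|_X\to0$; $X_a$ denotes the closed ideal of all order continuous elements of $X$. The support $\operatorname{supp}(Y)$ of a subspace $Y\subset L_0$ is the smallest measurable set $A$ (up to null sets) with $f\chi_{\Omega\setminus A}=0$ for all $f\in Y$. $X$ has the semi-Fatou property if $0\le x_n\uparrow x$ with $x_n,x\in X$ implies $\|x_n\|_X\to\|x\|_X$. $\operatorname{dist}_X(f,M)=\inf\{\|f-m\|_X: m\in M\}$. "$X$ contains a lattice isometric copy of $\ell_\infty$" means there is a linear isometric embedding $T:\ell_\infty\to X$ which is a lattice homomorphism (preserves the lattice operations). *)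

theory Defs
  imports "HOL-Analysis.Analysis"
begin

text \<open>Elements of L0 are represented by real-valued Borel measurable functions;
  equality in L0 is equality almost everywhere.\<close>

definition complete_sigma_finite :: "'a measure \<Rightarrow> bool" where
  "complete_sigma_finite M \<longleftrightarrow> sigma_finite_measure M \<and>
     (\<forall>A B. B \<in> null_sets M \<longrightarrow> A \<subseteq> B \<longrightarrow> A \<in> sets M)"

definition banach_ideal_space ::
  "'a measure \<Rightarrow> ('a \<Rightarrow> real) set \<Rightarrow> (('a \<Rightarrow> real) \<Rightarrow> real) \<Rightarrow> bool" where
  "banach_ideal_space M X N \<longleftrightarrow>
     X \<subseteq> borel_measurable M \<and>
     (\<lambda>_. 0) \<in> X \<and>
     (\<forall>f\<in>X. \<forall>g\<in>X. (\<lambda>w. f w + g w) \<in> X) \<and>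
     (\<forall>c. \<forall>f\<in>X. (\<lambda>w. c * f w) \<in> X) \<and>
     (\<forall>f\<in>X. N f \<ge> 0) \<and>
     (\<forall>f\<in>X. N f = 0 \<longleftrightarrow> (AE w in M. f w = 0)) \<and>
     (\<forall>f\<in>X. \<forall>g\<in>X. N (\<lambda>w. f w + g w) \<le> N f + N g) \<and>
     (\<forall>c. \<forall>f\<in>X. N (\<lambda>w. c * f w) = \<bar>c\<bar> * N f) \<and>
     \<comment> \<open>completeness\<close>
     (\<forall>u. (\<forall>n. u n \<in> X) \<longrightarrow>
        (\<forall>e>0. \<exists>K. \<forall>m\<ge>K. \<forall>n\<ge>K. N (\<lambda>w. u m w - u n w) < e) \<longrightarrow>
        (\<exists>f\<in>X. (\<lambda>n. N (\<lambda>w. u n w - f w)) \<longlonglongrightarrow> 0)) \<and>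
     \<comment> \<open>ideal property\<close>
     (\<forall>f g. f \<in> borel_measurable M \<longrightarrow> g \<in> X \<longrightarrow> (AE w in M. \<bar>f w\<bar> \<le> \<bar>g w\<bar>) \<longrightarrow>
        f \<in> X \<and> N f \<le> N g)"

text \<open>x is order continuous: for every sequence 0 \<le> x_n \<le> |x| decreasing to 0
  (in L0, i.e. a.e. pointwise, infimum of a countable decreasing sequence in L0
  being the a.e. pointwise infimum), N x_n \<rightarrow> 0.\<close>
definition order_continuous ::
  "'a measure \<Rightarrow> ('a \<Rightarrow> real) set \<Rightarrow> (('a \<Rightarrow> real) \<Rightarrow> real) \<Rightarrow> ('a \<Rightarrow> real) \<Rightarrow> bool" where
  "order_continuous M X N x \<longleftrightarrow> x \<in> X \<and>
     (\<forall>xs. (\<forall>n. xs n \<in> borel_measurable M) \<longrightarrow>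
        (\<forall>n. AE w in M. 0 \<le> xs n w \<and> xs n w \<le> \<bar>x w\<bar>) \<longrightarrow>
        (\<forall>n. AE w in M. xs (Suc n) w \<le> xs n w) \<longrightarrow>
        (AE w in M. (\<lambda>n. xs n w) \<longlonglongrightarrow> 0) \<longrightarrow>
        (\<lambda>n. N (xs n)) \<longlonglongrightarrow> 0)"

definition order_cont_part ::
  "'a measure \<Rightarrow> ('a \<Rightarrow> real) set \<Rightarrow> (('a \<Rightarrow> real) \<Rightarrow> real) \<Rightarrow> ('a \<Rightarrow> real) set" where
  "order_cont_part M X N = {x. order_continuous M X N x}"

definition is_support :: "'a measure \<Rightarrow> ('a \<Rightarrow> real) set \<Rightarrow> 'a set \<Rightarrow> bool" where
  "is_support M Y A \<longleftrightarrow> A \<in> sets M \<and>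
     (\<forall>f\<in>Y. AE w in M. w \<notin> A \<longrightarrow> f w = 0) \<and>
     (\<forall>B\<in>sets M. (\<forall>f\<in>Y. AE w in M. w \<notin> B \<longrightarrow> f w = 0) \<longrightarrow> (AE w in M. w \<in> A \<longrightarrow> w \<in> B))"

definition semi_fatou ::
  "'a measure \<Rightarrow> ('a \<Rightarrow> real) set \<Rightarrow> (('a \<Rightarrow> real) \<Rightarrow> real) \<Rightarrow> bool" where
  "semi_fatou M X N \<longleftrightarrow>
     (\<forall>xs x. (\<forall>n. xs n \<in> X) \<longrightarrow> x \<in> X \<longrightarrow>
        (\<forall>n. AE w in M. 0 \<le> xs n w \<and> xs n w \<le> xs (Suc n) w) \<longrightarrow>
        (AE w in M. (\<lambda>n. xs n w) \<longlonglongrightarrow> x w) \<longrightarrow>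
        (\<lambda>n. N (xs n)) \<longlonglongrightarrow> N x)"

definition dist_X ::
  "(('a \<Rightarrow> real) \<Rightarrow> real) \<Rightarrow> ('a \<Rightarrow> real) \<Rightarrow> ('a \<Rightarrow> real) set \<Rightarrow> real" where
  "dist_X N f Y = (INF m\<in>Y. N (\<lambda>w. f w - m w))"

definition lattice_isometric_linf ::
  "'a measure \<Rightarrow> ('a \<Rightarrow> real) set \<Rightarrow> (('a \<Rightarrow> real) \<Rightarrow> real) \<Rightarrow> ((nat \<Rightarrow> real) \<Rightarrow> ('a \<Rightarrow> real)) \<Rightarrow> bool" where
  "lattice_isometric_linf M X N T \<longleftrightarrow>
     (\<forall>s. bounded (range s) \<longrightarrow> T s \<in> X) \<and>
     (\<forall>s t. bounded (range s) \<longrightarrow> bounded (range t) \<longrightarrow>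
        (AE w in M. T (\<lambda>n. s n + t n) w = T s w + T t w)) \<and>
     (\<forall>c s. bounded (range s) \<longrightarrow> (AE w in M. T (\<lambda>n. c * s n) w = c * T s w)) \<and>
     (\<forall>s t. bounded (range s) \<longrightarrow> bounded (range t) \<longrightarrow>
        (AE w in M. T (\<lambda>n. max (s n) (t n)) w = max (T s w) (T t w))) \<and>
     (\<forall>s. bounded (range s) \<longrightarrow> N (T s) = (SUP n. \<bar>s n\<bar>))"

end

theory Submission
  imports Defs
begin


context
  fixes M :: "'a measure" and X :: "('a \<Rightarrow> real) set" and N :: "('a \<Rightarrow> real) \<Rightarrow> real"
  assumes bis: "banach_ideal_space M X N"
begin

lemma bis_meas: "f \<in> X \<Longrightarrow> f \<in> borel_measurable M"
  using bis unfolding banach_ideal_space_def by blast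
lemma bis_add: "f \<in> X \<Longrightarrow> g \<in> X \<Longrightarrow> (\<lambda>w. f w + g w) \<in> X"
  using bis unfolding banach_ideal_space_def by blast
lemma bis_scal: "f \<in> X \<Longrightarrow> (\<lambda>w. c * f w) \<in> X"
  using bis unfolding banach_ideal_space_def by blast
lemma bis_nonneg: "f \<in> X \<Longrightarrow> N f \<ge> 0"
  using bis unfolding banach_ideal_space_def by blast
lemma bis_zero: "f \<in> X \<Longrightarrow> N f = 0 \<longleftrightarrow> (AE w in M. f w = 0)"
  using bis unfolding banach_ideal_space_def by blast
lemma bis_tri: "f \<in> X \<Longrightarrow> g \<in> X \<Longrightarrow> N (\<lambda>w. f w + g w) \<le> N f + N g"
  using bis unfolding banach_ideal_space_def by blast
lemma bis_hom: "f \<in> X \<Longrightarrow> N (\<lambda>w. c * f w) = \<bar>c\<bar> * N f"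
  using bis unfolding banach_ideal_space_def by blast
lemma bis_ideal: "f \<in> borel_measurable M \<Longrightarrow> g \<in> X \<Longrightarrow> (AE w in M. \<bar>f w\<bar> \<le> \<bar>g w\<bar>) \<Longrightarrow> f \<in> X \<and> N f \<le> N g"
  using bis unfolding banach_ideal_space_def by blast
lemma bis_ideal': "f \<in> borel_measurable M \<Longrightarrow> g \<in> X \<Longrightarrow> (\<And>w. \<bar>f w\<bar> \<le> \<bar>g w\<bar>) \<Longrightarrow> f \<in> X \<and> N f \<le> N g"
  using bis_ideal by auto
lemma bis_zero_in: "(\<lambda>_. 0) \<in> X"
  using bis unfolding banach_ideal_space_def by blast
lemma bis_diff: "f \<in> X \<Longrightarrow> g \<in> X \<Longrightarrow> (\<lambda>w. f w - g w) \<in> X"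
proof -
  assume "f \<in> X" "g \<in> X"
  then have "(\<lambda>w. f w + (-1) * g w) \<in> X" using bis_add bis_scal by blast
  then show ?thesis by simp
qed

lemma oc_in: "x \<in> order_cont_part M X N \<Longrightarrow> x \<in> X"
  unfolding order_cont_part_def order_continuous_def by simp

lemma oc_ideal:
  assumes x: "x \<in> order_cont_part M X N" and y: "y \<in> borel_measurable M"
    and le: "AE w in M. \<bar>y w\<bar> \<le> \<bar>x w\<bar>"
  shows "y \<in> order_cont_part M X N"
proof -
  have xX: "x \<in> X" using oc_in x by blast
  have yX: "y \<in> X" using bis_ideal[OF y xX le] by blast
  show ?thesis unfolding order_cont_part_def order_continuous_def
  proof (intro CollectI conjI yX allI impI)
    fix xs :: "nat \<Rightarrow> 'a \<Rightarrow> real"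
    assume m: "\<forall>n. xs n \<in> borel_measurable M"
      and b: "\<forall>n. AE w in M. 0 \<le> xs n w \<and> xs n w \<le> \<bar>y w\<bar>"
      and d: "\<forall>n. AE w in M. xs (Suc n) w \<le> xs n w"
      and l: "AE w in M. (\<lambda>n. xs n w) \<longlonglongrightarrow> 0"
    have b': "\<forall>n. AE w in M. 0 \<le> xs n w \<and> xs n w \<le> \<bar>x w\<bar>"
    proof
      fix n show "AE w in M. 0 \<le> xs n w \<and> xs n w \<le> \<bar>x w\<bar>"
        using b[rule_format, of n] le by eventually_elim auto
    qed
    from x have "order_continuous M X N x" unfolding order_cont_part_def by simp
    then show "(\<lambda>n. N (xs n)) \<longlonglongrightarrow> 0"
      unfolding order_continuous_def using m b' d l by (elim conjE) (rule allE, assumption, blast)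
  qed
qed

lemma oc_zero: "(\<lambda>_. 0) \<in> order_cont_part M X N"
  unfolding order_cont_part_def order_continuous_def
proof (intro CollectI conjI bis_zero_in allI impI)
  fix xs :: "nat \<Rightarrow> 'a \<Rightarrow> real"
  assume m: "\<forall>n. xs n \<in> borel_measurable M"
    and b: "\<forall>n. AE w in M. 0 \<le> xs n w \<and> xs n w \<le> \<bar>0\<bar>"
  have "\<And>n. N (xs n) = 0"
  proof -
    fix n
    have "AE w in M. \<bar>xs n w\<bar> \<le> \<bar>(\<lambda>_. 0::real) w\<bar>" using b[rule_format, of n] by eventually_elim auto
    then have "xs n \<in> X" using bis_ideal[OF m[rule_format] bis_zero_in] by blast
    moreover have "AE w in M. xs n w = 0" using b[rule_format, of n] by eventually_elim auto
    ultimately show "N (xs n) = 0" using bis_zero by blast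
  qed
  then show "(\<lambda>n. N (xs n)) \<longlonglongrightarrow> 0" by simp
qed

lemma oc_add:
  assumes x: "x \<in> order_cont_part M X N" and y: "y \<in> order_cont_part M X N"
  shows "(\<lambda>w. x w + y w) \<in> order_cont_part M X N"
proof -
  have xX: "x \<in> X" and yX: "y \<in> X" using oc_in x y by auto
  have xyX: "(\<lambda>w. x w + y w) \<in> X" using bis_add xX yX by blast
  have xm: "x \<in> borel_measurable M" and ym: "y \<in> borel_measurable M" using bis_meas xX yX by auto
  have ocx: "order_continuous M X N x" and ocy: "order_continuous M X N y"
    using x y unfolding order_cont_part_def by auto
  show ?thesis unfolding order_cont_part_def order_continuous_def
  proof (intro CollectI conjI xyX allI impI)
    fix xs :: "nat \<Rightarrow> 'a \<Rightarrow> real"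
    assume m: "\<forall>n. xs n \<in> borel_measurable M"
      and b: "\<forall>n. AE w in M. 0 \<le> xs n w \<and> xs n w \<le> \<bar>x w + y w\<bar>"
      and d: "\<forall>n. AE w in M. xs (Suc n) w \<le> xs n w"
      and l: "AE w in M. (\<lambda>n. xs n w) \<longlonglongrightarrow> 0"
    define a where "a n w = min (xs n w) \<bar>x w\<bar>" for n w
    define c where "c n w = max (xs n w - \<bar>x w\<bar>) 0" for n w
    have am: "\<forall>n. a n \<in> borel_measurable M"
    proof
      fix n
      have [measurable]: "xs n \<in> borel_measurable M" "x \<in> borel_measurable M" using m xm by auto
      show "a n \<in> borel_measurable M" unfolding a_def by measurable
    qed
    have cm: "\<forall>n. c n \<in> borel_measurable M"
    proof
      fix n
      have [measurable]: "xs n \<in> borel_measurable M" "x \<in> borel_measurable M" using m xm by auto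
      show "c n \<in> borel_measurable M" unfolding c_def by measurable
    qed
    have ab: "\<forall>n. AE w in M. 0 \<le> a n w \<and> a n w \<le> \<bar>x w\<bar>"
    proof
      fix n show "AE w in M. 0 \<le> a n w \<and> a n w \<le> \<bar>x w\<bar>"
        using b[rule_format, of n] by eventually_elim (auto simp: a_def)
    qed
    have cb: "\<forall>n. AE w in M. 0 \<le> c n w \<and> c n w \<le> \<bar>y w\<bar>"
    proof
      fix n show "AE w in M. 0 \<le> c n w \<and> c n w \<le> \<bar>y w\<bar>"
        using b[rule_format, of n] by eventually_elim (auto simp: c_def)
    qed
    have ad: "\<forall>n. AE w in M. a (Suc n) w \<le> a n w"
    proof
      fix n show "AE w in M. a (Suc n) w \<le> a n w"
        using d[rule_format, of n] by eventually_elim (auto simp: a_def)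
    qed
    have cd: "\<forall>n. AE w in M. c (Suc n) w \<le> c n w"
    proof
      fix n show "AE w in M. c (Suc n) w \<le> c n w"
        using d[rule_format, of n] by eventually_elim (auto simp: c_def)
    qed
    have al: "AE w in M. (\<lambda>n. a n w) \<longlonglongrightarrow> 0"
      using l
    proof eventually_elim
      case (elim w)
      have "(\<lambda>n. min (xs n w) \<bar>x w\<bar>) \<longlonglongrightarrow> min 0 \<bar>x w\<bar>"
        by (intro tendsto_min elim(1) tendsto_const)
      then show ?case by (simp add: a_def)
    qed
    have cl: "AE w in M. (\<lambda>n. c n w) \<longlonglongrightarrow> 0"
      using l
    proof eventually_elim
      case (elim w)
      have "(\<lambda>n. max (xs n w - \<bar>x w\<bar>) 0) \<longlonglongrightarrow> max (0 - \<bar>x w\<bar>) 0"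
        by (intro tendsto_max tendsto_diff elim(1) tendsto_const)
      then show ?case by (simp add: c_def)
    qed
    have Na: "(\<lambda>n. N (a n)) \<longlonglongrightarrow> 0" by (rule ocx[unfolded order_continuous_def, THEN conjunct2, rule_format, OF am[rule_format] ab[rule_format] ad[rule_format] al])
    have Nc: "(\<lambda>n. N (c n)) \<longlonglongrightarrow> 0" by (rule ocy[unfolded order_continuous_def, THEN conjunct2, rule_format, OF cm[rule_format] cb[rule_format] cd[rule_format] cl])
have aX: "a n \<in> X" for n
    proof -
      have "AE w in M. \<bar>a n w\<bar> \<le> \<bar>x w\<bar>" using ab[rule_format, of n] by eventually_elim auto
      then show ?thesis by (rule bis_ideal[OF am[rule_format] xX, THEN conjunct1])
    qed
have cX: "c n \<in> X" for n
    proof -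
      have "AE w in M. \<bar>c n w\<bar> \<le> \<bar>y w\<bar>" using cb[rule_format, of n] by eventually_elim auto
      then show ?thesis by (rule bis_ideal[OF cm[rule_format] yX, THEN conjunct1])
    qed
have xsX: "xs n \<in> X" for n
    proof -
      have "AE w in M. \<bar>xs n w\<bar> \<le> \<bar>x w + y w\<bar>" using b[rule_format, of n] by eventually_elim auto
      then show ?thesis by (rule bis_ideal[OF m[rule_format] xyX, THEN conjunct1])
    qed
    have eq: "xs n = (\<lambda>w. a n w + c n w)" for n
      by (auto simp: a_def c_def fun_eq_iff)
    have up: "N (xs n) \<le> N (a n) + N (c n)" for n
      using bis_tri[OF aX cX, of n n] by (simp add: eq[symmetric])
    have lo: "0 \<le> N (xs n)" for n by (rule bis_nonneg[OF xsX])
    have h: "(\<lambda>n. N (a n) + N (c n)) \<longlonglongrightarrow> 0" using tendsto_add[OF Na Nc] by simp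
    show "(\<lambda>n. N (xs n)) \<longlonglongrightarrow> 0"
    proof (rule tendsto_sandwich[OF _ _ tendsto_const h])
      show "\<forall>\<^sub>F n in sequentially. 0 \<le> N (xs n)" using lo by simp
      show "\<forall>\<^sub>F n in sequentially. N (xs n) \<le> N (a n) + N (c n)" using up by simp
    qed
  qed
qed

lemma oc_nabs:
  assumes g: "g \<in> order_cont_part M X N"
  shows "(\<lambda>w. real n * \<bar>g w\<bar>) \<in> order_cont_part M X N"
proof (induction n)
  case 0 then show ?case using oc_zero by simp
next
  case (Suc n)
  have gm: "g \<in> borel_measurable M" using bis_meas oc_in g by blast
  have "(\<lambda>w. \<bar>g w\<bar>) \<in> order_cont_part M X N"
    by (rule oc_ideal[OF g]) (use gm in auto)
  from oc_add[OF Suc this] show ?case by (simp add: algebra_simps)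
qed

end


lemma fwd:
  assumes bis: "banach_ideal_space M X N"
    and T: "lattice_isometric_linf M X N T"
  shows "\<exists>f\<in>X. N f = 1 \<and> dist_X N f (order_cont_part M X N) = 1"
proof -
  let ?Xa = "order_cont_part M X N"
  have TX: "\<And>s. bounded (range s) \<Longrightarrow> T s \<in> X"
    and Tadd: "\<And>s t. bounded (range s) \<Longrightarrow> bounded (range t) \<Longrightarrow>
        (AE w in M. T (\<lambda>n. s n + t n) w = T s w + T t w)"
    and Tscal: "\<And>c s. bounded (range s) \<Longrightarrow> (AE w in M. T (\<lambda>n. c * s n) w = c * T s w)"
    and Tmax: "\<And>s t. bounded (range s) \<Longrightarrow> bounded (range t) \<Longrightarrow>
        (AE w in M. T (\<lambda>n. max (s n) (t n)) w = max (T s w) (T t w))"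
    and Tnorm: "\<And>s. bounded (range s) \<Longrightarrow> N (T s) = (SUP n. \<bar>s n\<bar>)"
    using T unfolding lattice_isometric_linf_def by blast+
  define \<delta> where "\<delta> n = (\<lambda>k::nat. if k = n then 1 else 0::real)" for n
  define one where "one = (\<lambda>k::nat. 1::real)"
  define zero where "zero = (\<lambda>k::nat. 0::real)"
  have bd: "bounded (range (\<delta> n))" for n
    unfolding bounded_iff \<delta>_def by (rule exI[of _ 1]) auto
  have bone: "bounded (range one)" unfolding one_def by simp
  have bzero: "bounded (range zero)" unfolding zero_def by simp
  define e where "e n = T (\<delta> n)" for n
  define u where "u = T one"
  have eX: "e n \<in> X" for n unfolding e_def using TX bd by blast
  have uX: "u \<in> X" unfolding u_def using TX bone by blast
  have em: "e n \<in> borel_measurable M" for n using bis_meas[OF bis eX] .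
  have Nu: "N u = 1" unfolding u_def using Tnorm[OF bone] by (simp add: one_def)
  have Ne: "N (e n) = 1" for n
  proof -
    have bda: "bdd_above (range (\<lambda>k. \<bar>\<delta> n k\<bar>))"
      by (rule bdd_aboveI[of _ 1]) (auto simp: \<delta>_def)
    have "(SUP k. \<bar>\<delta> n k\<bar>) = 1"
    proof (rule antisym)
      show "(SUP k. \<bar>\<delta> n k\<bar>) \<le> 1" by (rule cSUP_least) (auto simp: \<delta>_def)
      have "\<bar>\<delta> n n\<bar> \<le> (SUP k. \<bar>\<delta> n k\<bar>)" by (rule cSUP_upper[OF _ bda]) simp
      then show "1 \<le> (SUP k. \<bar>\<delta> n k\<bar>)" by (simp add: \<delta>_def)
    qed
    then show ?thesis unfolding e_def using Tnorm[OF bd] by simp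
  qed
  have T0: "AE w in M. T zero w = 0"
    using Tscal[OF bzero, of 0] by (simp add: zero_def)
  have epos: "AE w in M. 0 \<le> e n w" for n
  proof -
    have eq: "(\<lambda>k. max (\<delta> n k) (zero k)) = \<delta> n" by (auto simp: \<delta>_def zero_def fun_eq_iff)
    show ?thesis using Tmax[OF bd bzero, of n] T0 unfolding eq e_def by eventually_elim auto
  qed
  have eleu: "AE w in M. e n w \<le> u w" for n
  proof -
    have eq: "(\<lambda>k. max (\<delta> n k) (one k)) = one" by (auto simp: \<delta>_def one_def fun_eq_iff)
    show ?thesis using Tmax[OF bd bone, of n] unfolding eq e_def u_def by eventually_elim auto
  qed
  have edisj: "AE w in M. e n w = 0 \<or> e m w = 0" if "n \<noteq> m" for n m
  proof -
    have eq: "(\<lambda>k. max (\<delta> n k) (\<delta> m k)) = (\<lambda>k. \<delta> n k + \<delta> m k)" using that by (auto simp: \<delta>_def fun_eq_iff)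
    show ?thesis using Tmax[OF bd bd, of n m] Tadd[OF bd bd, of n m] epos[of n] epos[of m]
      unfolding eq e_def by eventually_elim auto
  qed
  have AEall: "AE w in M. (\<forall>n. 0 \<le> e n w) \<and> (\<forall>n m. n \<noteq> m \<longrightarrow> e n w = 0 \<or> e m w = 0)"
  proof -
    have 1: "AE w in M. \<forall>n. 0 \<le> e n w" using epos by (simp add: AE_all_countable)
    have "AE w in M. \<forall>n m. n \<noteq> m \<longrightarrow> e n w = 0 \<or> e m w = 0"
      using edisj by (simp add: AE_all_countable)
    with 1 show ?thesis by eventually_elim auto
  qed
  define A where "A n = {w \<in> space M. 0 < e n w}" for n
  define A' where "A' n = A n - (\<Union>m\<in>{..<n}. A m)" for n
  have Am: "A n \<in> sets M" for n unfolding A_def using em[of n] by measurable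
  have A'm: "A' n \<in> sets M" for n unfolding A'_def using Am by auto
  have A'disj: "w \<in> A' i \<Longrightarrow> w \<in> A' j \<Longrightarrow> i = j" for w i j
    unfolding A'_def by (cases i j rule: linorder_cases) auto
  have eind: "AE w in M. \<forall>n. e n w = e n w * indicator (A' n) w"
    using AEall
  proof (rule AE_mp[OF _ AE_I2], intro impI allI)
    fix w n assume w: "w \<in> space M" and h: "(\<forall>n. 0 \<le> e n w) \<and> (\<forall>n m. n \<noteq> m \<longrightarrow> e n w = 0 \<or> e m w = 0)"
    show "e n w = e n w * indicator (A' n) w"
    proof (cases "e n w = 0")
      case False
      have "0 \<le> e n w" using h by blast
      with False have "0 < e n w" by linarith
      then have "w \<in> A n" using w by (simp add: A_def)
      moreover have "w \<notin> A m" if "m < n" for m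
      proof -
        have "e m w = 0" using h False that by (metis less_irrefl)
        then show ?thesis by (simp add: A_def)
      qed
      ultimately have "w \<in> A' n" by (auto simp: A'_def)
      then show ?thesis by simp
    qed simp
  qed
  have main: "1 \<le> N (\<lambda>w. u w - g w)" if g: "g \<in> ?Xa" for g
  proof -
    have gX: "g \<in> X" using oc_in[OF bis g] .
    have gm: "g \<in> borel_measurable M" using bis_meas[OF bis gX] .
    define U where "U k = (\<Union>j\<in>{k..}. A' j)" for k
    have Um: "U k \<in> sets M" for k unfolding U_def using A'm by auto
    define xs where "xs k = (\<lambda>w. \<bar>g w\<bar> * indicator (U k) w)" for k
    have xsm: "\<forall>k. xs k \<in> borel_measurable M"
      unfolding xs_def using gm Um by auto
    have xsb: "\<forall>k. AE w in M. 0 \<le> xs k w \<and> xs k w \<le> \<bar>g w\<bar>"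
      by (auto simp: xs_def indicator_def)
    have xsd: "\<forall>k. AE w in M. xs (Suc k) w \<le> xs k w"
      by (auto simp: xs_def indicator_def U_def)
    have xsl: "AE w in M. (\<lambda>k. xs k w) \<longlonglongrightarrow> 0"
    proof (rule AE_I2)
      fix w
      have "eventually (\<lambda>k. xs k w = 0) sequentially"
      proof (cases "\<exists>j. w \<in> A' j")
        case True
        then obtain j where j: "w \<in> A' j" by blast
        have "w \<notin> U k" if "k \<ge> Suc j" for k
          using that A'disj[OF j] by (auto simp: U_def)
        then show ?thesis unfolding eventually_sequentially xs_def by (intro exI[of _ "Suc j"]) auto
      next
        case False
        then show ?thesis by (auto simp: xs_def U_def)
      qed
      then show "(\<lambda>k. xs k w) \<longlonglongrightarrow> 0" by (rule tendsto_eventually)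
    qed
    have ocg: "order_continuous M X N g" using g unfolding order_cont_part_def by simp
    have Nxs: "(\<lambda>k. N (xs k)) \<longlonglongrightarrow> 0"
      by (rule ocg[unfolded order_continuous_def, THEN conjunct2, rule_format, OF xsm[rule_format] xsb[rule_format] xsd[rule_format] xsl])
    define d where "d = (\<lambda>w. u w - g w)"
    have dX: "d \<in> X" unfolding d_def using bis_diff[OF bis uX gX] .
    have dm: "d \<in> borel_measurable M" using bis_meas[OF bis dX] .
    have bound: "1 \<le> N d + N (xs k)" for k
    proof -
      define p where "p = (\<lambda>w. \<bar>d w\<bar> * indicator (A' k) w)"
      define q where "q = (\<lambda>w. \<bar>g w\<bar> * indicator (A' k) w)"
      have pm: "p \<in> borel_measurable M" unfolding p_def using dm A'm by auto
      have qm: "q \<in> borel_measurable M" unfolding q_def using gm A'm by auto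
      have xsX: "xs k \<in> X"
        using bis_ideal'[OF bis xsm[rule_format] gX, of k] by (auto simp: xs_def indicator_def)
      have p: "p \<in> X \<and> N p \<le> N d"
        using bis_ideal'[OF bis pm dX] by (auto simp: p_def indicator_def)
      have q: "q \<in> X \<and> N q \<le> N (xs k)"
        using bis_ideal'[OF bis qm xsX] by (auto simp: q_def xs_def indicator_def U_def)
      have pq: "(\<lambda>w. p w + q w) \<in> X" using bis_add[OF bis] p q by blast
      have "AE w in M. \<bar>e k w\<bar> \<le> \<bar>p w + q w\<bar>"
        using eind epos[of k] eleu[of k]
      proof eventually_elim
        case (elim w)
        show ?case
        proof (cases "w \<in> A' k")
          case True
          then have "p w + q w = \<bar>d w\<bar> + \<bar>g w\<bar>" by (simp add: p_def q_def)
          moreover have "u w \<le> \<bar>d w\<bar> + \<bar>g w\<bar>" unfolding d_def by linarith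
          ultimately show ?thesis using elim by auto
        next
          case False
          then have "e k w = 0" using elim(1) by (metis indicator_simps(2) mult_zero_right)
          then show ?thesis by simp
        qed
      qed
      then have "N (e k) \<le> N (\<lambda>w. p w + q w)" using bis_ideal[OF bis em pq] by blast
      also have "\<dots> \<le> N p + N q" using bis_tri[OF bis] p q by blast
      finally show ?thesis using Ne[of k] p q by linarith
    qed
    have "(\<lambda>k. N d + N (xs k)) \<longlonglongrightarrow> N d + 0" by (intro tendsto_add tendsto_const Nxs)
    then have "1 \<le> N d + 0" by (rule LIMSEQ_le_const) (use bound in auto)
    then show ?thesis by (simp add: d_def)
  qed
  have ne: "?Xa \<noteq> {}" using oc_zero[OF bis] by blast
  have bdb: "bdd_below ((\<lambda>m. N (\<lambda>w. u w - m w)) ` ?Xa)"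
    by (rule bdd_belowI[of _ 0]) (auto intro!: bis_nonneg[OF bis] bis_diff[OF bis uX] dest: oc_in[OF bis])
  have "dist_X N u ?Xa = 1"
  proof (rule antisym)
    have "dist_X N u ?Xa \<le> N (\<lambda>w. u w - (\<lambda>_. 0) w)"
      unfolding dist_X_def by (rule cINF_lower[OF bdb oc_zero[OF bis]])
    then show "dist_X N u ?Xa \<le> 1" using Nu by simp
    show "1 \<le> dist_X N u ?Xa"
      unfolding dist_X_def by (rule cINF_greatest[OF ne]) (rule main)
  qed
  then show ?thesis using uX Nu by blast
qed



lemma exhaust:
  assumes bis: "banach_ideal_space M X N" and sf: "sigma_finite_measure M"
    and sXa: "is_support M (order_cont_part M X N) A" and sX: "is_support M X A"
    and FX: "F \<in> X" and Fpos: "\<And>w. 0 \<le> F w"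
  shows "\<exists>B. (\<forall>n. B n \<in> sets M) \<and> incseq B \<and>
     (\<forall>n. (\<lambda>w. F w * indicator (B n) w) \<in> order_cont_part M X N) \<and>
     (AE w in M. F w \<noteq> 0 \<longrightarrow> w \<in> (\<Union>n. B n))"
proof -
  let ?Xa = "order_cont_part M X N"
  interpret sigma_finite_measure M by (rule sf)
  obtain h where hm: "h \<in> borel_measurable M" and hint: "integral\<^sup>N M h \<noteq> \<infinity>"
    and hpos: "\<forall>x\<in>space M. 0 < h x \<and> h x < \<infinity>"
    using Ex_finite_integrable_function by blast
  define \<nu> where "\<nu> = density M h"
  have sets\<nu>: "sets \<nu> = sets M" and space\<nu>: "space \<nu> = space M" unfolding \<nu>_def by auto
  have "emeasure \<nu> (space \<nu>) = (\<integral>\<^sup>+ x. h x * indicator (space M) x \<partial>M)"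
    unfolding \<nu>_def space_density by (rule emeasure_density[OF hm sets.top])
  also have "\<dots> = integral\<^sup>N M h" by (rule nn_integral_cong) auto
  finally have "emeasure \<nu> (space \<nu>) \<noteq> \<infinity>" using hint by simp
  then interpret fin: finite_measure \<nu> by (rule finite_measureI)
  have nullnu: "C \<in> null_sets M" if C: "C \<in> sets M" and m0: "measure \<nu> C = 0" for C
  proof -
    have "emeasure \<nu> C = 0" using m0 fin.emeasure_eq_measure by simp
    then have "C \<in> null_sets \<nu>" using C sets\<nu> by (auto intro: null_setsI)
    then have "AE x in M. x \<in> C \<longrightarrow> h x = 0" using null_sets_density_iff[OF hm] unfolding \<nu>_def by blast
    then have "AE x in M. x \<notin> C"
      by (rule AE_mp[OF _ AE_I2]) (use hpos in force)
    then show ?thesis using AE_iff_null_sets[OF C] by blast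
  qed
  have Fm: "F \<in> borel_measurable M" using bis_meas[OF bis FX] .
  define S where "S = {B \<in> sets M. (\<lambda>w. F w * indicator B w) \<in> ?Xa}"
  have Sun: "B \<union> C \<in> S" if "B \<in> S" "C \<in> S" for B C
  proof -
    have B: "B \<in> sets M" "(\<lambda>w. F w * indicator B w) \<in> ?Xa" and C: "C \<in> sets M" "(\<lambda>w. F w * indicator C w) \<in> ?Xa"
      using that by (auto simp: S_def)
    have sum: "(\<lambda>w. F w * indicator B w + F w * indicator C w) \<in> ?Xa" using oc_add[OF bis B(2) C(2)] .
    have "(\<lambda>w. F w * indicator (B \<union> C) w) \<in> ?Xa"
    proof (rule oc_ideal[OF bis sum])
      show "(\<lambda>w. F w * indicator (B \<union> C) w) \<in> borel_measurable M" using Fm B C by auto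
      show "AE w in M. \<bar>F w * indicator (B \<union> C) w\<bar> \<le> \<bar>F w * indicator B w + F w * indicator C w\<bar>"
        using Fpos by (intro AE_I2) (auto simp: indicator_def)
    qed
    then show ?thesis using B C by (auto simp: S_def)
  qed
  have Se: "{} \<in> S" using oc_zero[OF bis] by (simp add: S_def)
  define \<sigma> where "\<sigma> = (SUP B\<in>S. measure \<nu> B)"
  have bddS: "bdd_above ((measure \<nu>) ` S)"
    by (rule bdd_aboveI[of _ "measure \<nu> (space \<nu>)"]) (auto intro: fin.bounded_measure)
  have "\<forall>n. \<exists>B\<in>S. \<sigma> - inverse (real (Suc n)) < measure \<nu> B"
  proof
    fix n
    have "\<sigma> - inverse (real (Suc n)) < \<sigma>" by simp
    then show "\<exists>B\<in>S. \<sigma> - inverse (real (Suc n)) < measure \<nu> B"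
      unfolding \<sigma>_def using less_cSUP_iff[OF _ bddS] Se by blast
  qed
  then obtain B' where B'S: "\<And>n. B' n \<in> S" and B'gt: "\<And>n. \<sigma> - inverse (real (Suc n)) < measure \<nu> (B' n)"
    by metis
  define B where "B n = (\<Union>i\<in>{..n}. B' i)" for n
  have BS: "B n \<in> S" for n
  proof (induction n)
    case 0 then show ?case using B'S by (simp add: B_def)
  next
    case (Suc n)
    have "B (Suc n) = B n \<union> B' (Suc n)" by (auto simp: B_def atMost_Suc)
    then show ?case using Sun[OF Suc B'S] by simp
  qed
  have Bm: "B n \<in> sets M" for n using BS by (simp add: S_def)
  have Bgt: "\<sigma> - inverse (real (Suc n)) < measure \<nu> (B n)" for n
  proof -
    have "measure \<nu> (B' n) \<le> measure \<nu> (B n)"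
    proof (rule fin.finite_measure_mono)
      show "B' n \<subseteq> B n" by (auto simp: B_def)
      show "B n \<in> sets \<nu>" using Bm[of n] sets\<nu> by simp
    qed
    then show ?thesis using B'gt[of n] by linarith
  qed
  have Binc: "incseq B" unfolding incseq_def B_def by (auto intro: le_trans)
  have key: "C \<in> null_sets M" if CS: "C \<in> S" and Cd: "C \<inter> (\<Union>n. B n) = {}" for C
  proof (rule ccontr)
    assume nn: "C \<notin> null_sets M"
    have Cm: "C \<in> sets M" using CS by (simp add: S_def)
    have "measure \<nu> C \<noteq> 0" using nullnu[OF Cm] nn by blast
    then have pos: "0 < measure \<nu> C" using measure_nonneg[of \<nu> C] by linarith
    obtain n where n: "inverse (real (Suc n)) < measure \<nu> C" using reals_Archimedean[OF pos] by blast
    have "B n \<inter> C = {}" using Cd by auto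
    then have "measure \<nu> (B n \<union> C) = measure \<nu> (B n) + measure \<nu> C"
      using fin.finite_measure_Union[of "B n" C] Bm Cm sets\<nu> by simp
    also have "\<dots> > \<sigma>" using Bgt[of n] n by linarith
    finally have gt: "\<sigma> < measure \<nu> (B n \<union> C)" .
    have "measure \<nu> (B n \<union> C) \<le> \<sigma>" unfolding \<sigma>_def
      by (rule cSUP_upper[OF Sun[OF BS CS] bddS])
    then show False using gt by linarith
  qed
  define Z where "Z = {w \<in> space M. F w \<noteq> 0} - (\<Union>n. B n)"
  have Zm: "Z \<in> sets M" unfolding Z_def using Fm Bm by auto
  have Znull: "Z \<in> null_sets M"
  proof (rule ccontr)
    assume Znn: "Z \<notin> null_sets M"
    have Am: "A \<in> sets M" using sX unfolding is_support_def by blast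
    have FA: "AE w in M. w \<notin> A \<longrightarrow> F w = 0" using sX FX unfolding is_support_def by blast
    define Z1 where "Z1 = Z \<inter> A"
    have Z1m: "Z1 \<in> sets M" unfolding Z1_def using Zm Am by auto
    have Z1nn: "Z1 \<notin> null_sets M"
    proof
      assume "Z1 \<in> null_sets M"
      then have "AE w in M. w \<notin> Z1" using AE_iff_null_sets[OF Z1m] by blast
      then have "AE w in M. w \<notin> Z" using FA by eventually_elim (auto simp: Z1_def Z_def)
      then show False using Znn AE_iff_null_sets[OF Zm] by blast
    qed
    obtain g where gXa: "g \<in> ?Xa" and gnz: "\<not> (AE w in M. w \<notin> space M - Z1 \<longrightarrow> g w = 0)"
    proof (rule ccontr)
      assume "\<not> thesis"
      then have all: "\<forall>g\<in>?Xa. AE w in M. w \<notin> space M - Z1 \<longrightarrow> g w = 0" using that by blast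
      have "space M - Z1 \<in> sets M" using Z1m by auto
      then have "AE w in M. w \<in> A \<longrightarrow> w \<in> space M - Z1"
        using sXa all unfolding is_support_def by blast
      then have "AE w in M. w \<notin> Z1" by eventually_elim (auto simp: Z1_def)
      then show False using Z1nn AE_iff_null_sets[OF Z1m] by blast
    qed
    have gX: "g \<in> X" using oc_in[OF bis gXa] .
    have gm: "g \<in> borel_measurable M" using bis_meas[OF bis gX] .
    define Z2 where "Z2 = {w \<in> Z1. g w \<noteq> 0}"
    have Z2m: "Z2 \<in> sets M"
    proof -
      have "Z2 = Z1 \<inter> {w \<in> space M. g w \<noteq> 0}" using Z1m sets.sets_into_space by (auto simp: Z2_def)
      then show ?thesis using Z1m gm by auto
    qed
    have Z2nn: "Z2 \<notin> null_sets M"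
    proof
      assume "Z2 \<in> null_sets M"
      then have "AE w in M. w \<notin> Z2" using AE_iff_null_sets[OF Z2m] by blast
      then have "AE w in M. w \<notin> space M - Z1 \<longrightarrow> g w = 0"
        by (rule AE_mp[OF _ AE_I2]) (auto simp: Z2_def)
      then show False using gnz by blast
    qed
    define Z3 where "Z3 n = {w \<in> Z2. F w \<le> real n * \<bar>g w\<bar>}" for n
    have Z3m: "Z3 n \<in> sets M" for n
    proof -
      have "Z3 n = Z2 \<inter> {w \<in> space M. F w \<le> real n * \<bar>g w\<bar>}" using Z2m sets.sets_into_space by (auto simp: Z3_def)
      then show ?thesis using Z2m gm Fm by auto
    qed
    have Z2U: "Z2 = (\<Union>n. Z3 n)"
    proof (intro equalityI subsetI)
      fix w assume w: "w \<in> Z2"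
      then have "g w \<noteq> 0" by (simp add: Z2_def)
      obtain n where "F w / \<bar>g w\<bar> \<le> real n" using real_arch_simple by blast
      then have "F w \<le> real n * \<bar>g w\<bar>" using \<open>g w \<noteq> 0\<close> by (simp add: divide_le_eq)
      then show "w \<in> (\<Union>n. Z3 n)" using w by (auto simp: Z3_def)
    qed (auto simp: Z3_def)
    obtain n where Z3nn: "Z3 n \<notin> null_sets M"
    proof (rule ccontr)
      assume "\<not> thesis"
      then have "\<forall>n. Z3 n \<in> null_sets M" using that by blast
      then have "(\<Union>n. Z3 n) \<in> null_sets M" by (intro null_sets_UN) auto
      then show False using Z2nn Z2U by simp
    qed
    have "(\<lambda>w. F w * indicator (Z3 n) w) \<in> ?Xa"
    proof (rule oc_ideal[OF bis oc_nabs[OF bis gXa, of n]])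
      show "(\<lambda>w. F w * indicator (Z3 n) w) \<in> borel_measurable M" using Fm Z3m by auto
      show "AE w in M. \<bar>F w * indicator (Z3 n) w\<bar> \<le> \<bar>real n * \<bar>g w\<bar>\<bar>"
        using Fpos by (intro AE_I2) (auto simp: indicator_def Z3_def)
    qed
    then have "Z3 n \<in> S" using Z3m by (simp add: S_def)
    moreover have "Z3 n \<inter> (\<Union>n. B n) = {}" by (auto simp: Z3_def Z2_def Z1_def Z_def)
    ultimately show False using key Z3nn by blast
  qed
  have "AE w in M. w \<notin> Z" using AE_iff_null_sets[OF Zm] Znull by blast
  then have "AE w in M. F w \<noteq> 0 \<longrightarrow> w \<in> (\<Union>n. B n)"
    by (rule AE_mp[OF _ AE_I2]) (auto simp: Z_def)
  moreover have "\<forall>n. (\<lambda>w. F w * indicator (B n) w) \<in> ?Xa" using BS by (simp add: S_def)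
  ultimately show ?thesis using Bm Binc by blast
qed



lemma abs_sgn_aux: "\<bar>x - sgn x * y\<bar> \<le> \<bar>\<bar>x\<bar> - (y::real)\<bar>"
proof (cases x "0::real" rule: linorder_cases)
  case less then show ?thesis by (simp add: abs_if)
next
  case equal then show ?thesis by simp
next
  case greater then show ?thesis by simp
qed

lemma sgn_aux: "\<bar>sgn (x::real) * y\<bar> \<le> \<bar>y\<bar>"
  by (cases x "0::real" rule: linorder_cases) auto

lemma max_mult_aux: "0 \<le> (c::real) \<Longrightarrow> max a b * c = max (a * c) (b * c)"
  by (cases "a \<le> b") (auto simp: max_def mult_right_mono order.antisym mult_right_mono[of b a c])

lemma bwd:
  assumes bis: "banach_ideal_space M X N" and sfat: "semi_fatou M X N"
    and sf: "sigma_finite_measure M"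
    and sXa: "is_support M (order_cont_part M X N) A" and sX: "is_support M X A"
    and fX: "f \<in> X" and Nf: "N f = 1" and df: "dist_X N f (order_cont_part M X N) = 1"
  shows "\<exists>T. lattice_isometric_linf M X N T"
proof -
  let ?Xa = "order_cont_part M X N"
  define F where "F w = \<bar>f w\<bar>" for w
  have fm: "f \<in> borel_measurable M" using bis_meas[OF bis fX] .
  have Fm: "F \<in> borel_measurable M" unfolding F_def using fm by measurable
  have Fpos: "\<And>w. 0 \<le> F w" by (simp add: F_def)
  have FX: "F \<in> X" and NFf: "N F \<le> N f" using bis_ideal'[OF bis Fm fX] by (auto simp: F_def)
  have "N f \<le> N F" using bis_ideal'[OF bis fm FX] by (auto simp: F_def)
  with NFf Nf have NF: "N F = 1" by simp
  have bdb: "bdd_below ((\<lambda>m. N (\<lambda>w. f w - m w)) ` ?Xa)"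
    by (rule bdd_belowI[of _ 0]) (auto intro!: bis_nonneg[OF bis] bis_diff[OF bis fX] dest: oc_in[OF bis])
  have P: "1 \<le> N (\<lambda>w. F w - g w)" if g: "g \<in> ?Xa" for g
  proof -
    have gX: "g \<in> X" using oc_in[OF bis g] .
    have gm: "g \<in> borel_measurable M" using bis_meas[OF bis gX] .
    define g' where "g' w = sgn (f w) * g w" for w
    have g'm: "g' \<in> borel_measurable M" unfolding g'_def using fm gm by measurable
    have g': "g' \<in> ?Xa"
      by (rule oc_ideal[OF bis g g'm]) (intro AE_I2, unfold g'_def, rule sgn_aux)
    have "dist_X N f ?Xa \<le> N (\<lambda>w. f w - g' w)"
      unfolding dist_X_def by (rule cINF_lower[OF bdb g'])
    also have "\<dots> \<le> N (\<lambda>w. F w - g w)"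
    proof -
      have "(\<lambda>w. f w - g' w) \<in> borel_measurable M" using fm g'm by measurable
      moreover have "(\<lambda>w. F w - g w) \<in> X" using bis_diff[OF bis FX gX] .
      ultimately show ?thesis using bis_ideal'[OF bis] abs_sgn_aux by (simp add: g'_def F_def)
    qed
    finally show ?thesis using df by simp
  qed
  obtain B where Bm: "\<And>n. B n \<in> sets M" and Binc: "incseq B"
    and BXa: "\<And>n. (\<lambda>w. F w * indicator (B n) w) \<in> ?Xa"
    and BAE: "AE w in M. F w \<noteq> 0 \<longrightarrow> w \<in> (\<Union>n. B n)"
    using exhaust[OF bis sf sXa sX FX Fpos] by blast
  have Q: "N (\<lambda>w. F w * indicator (- B n) w) = 1" for n
  proof (rule antisym)
    have "(\<lambda>w. F w * indicator (- B n) w) \<in> borel_measurable M" using Fm Bm by measurable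
    then show "N (\<lambda>w. F w * indicator (- B n) w) \<le> 1"
      using bis_ideal'[OF bis _ FX] NF Fpos by (simp add: indicator_def)
    have "(\<lambda>w. F w - F w * indicator (B n) w) = (\<lambda>w. F w * indicator (- B n) w)"
      by (auto simp: fun_eq_iff indicator_def)
    then show "1 \<le> N (\<lambda>w. F w * indicator (- B n) w)" using P[OF BXa[of n]] by simp
  qed
  have R: "\<exists>m>n. 1 - e < N (\<lambda>w. F w * indicator (B m - B n) w)" if e: "0 < e" for n e
  proof -
    define xs where "xs k = (\<lambda>w. F w * indicator (B k - B n) w)" for k
    define x where "x = (\<lambda>w. F w * indicator (- B n) w)"
    have xsX: "xs k \<in> X" for k
    proof -
      have "xs k \<in> borel_measurable M" unfolding xs_def using Fm Bm by measurable
      then show ?thesis using bis_ideal'[OF bis _ FX] Fpos by (simp add: xs_def indicator_def)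
    qed
    have xX: "x \<in> X"
    proof -
      have "x \<in> borel_measurable M" unfolding x_def using Fm Bm by measurable
      then show ?thesis using bis_ideal'[OF bis _ FX] Fpos by (simp add: x_def indicator_def)
    qed
    have mon: "\<forall>k. AE w in M. 0 \<le> xs k w \<and> xs k w \<le> xs (Suc k) w"
    proof (intro allI AE_I2)
      fix k w
      have "B k \<subseteq> B (Suc k)" using Binc by (simp add: incseq_SucD)
      then show "0 \<le> xs k w \<and> xs k w \<le> xs (Suc k) w" using Fpos[of w]
        by (auto simp: xs_def indicator_def)
    qed
    have lim: "AE w in M. (\<lambda>k. xs k w) \<longlonglongrightarrow> x w"
      using BAE
    proof eventually_elim
      case (elim w)
      have "eventually (\<lambda>k. xs k w = x w) sequentially"
      proof (cases "F w = 0")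
        case True then show ?thesis by (simp add: xs_def x_def)
      next
        case False
        then obtain j where j: "w \<in> B j" using elim by blast
        have "w \<in> B k" if "j \<le> k" for k using Binc j that by (auto simp: incseq_def)
        then show ?thesis unfolding eventually_sequentially
          by (intro exI[of _ j]) (auto simp: xs_def x_def indicator_def)
      qed
      then show ?case by (rule tendsto_eventually)
    qed
    have "(\<lambda>k. N (xs k)) \<longlonglongrightarrow> N x"
      using sfat xsX xX mon lim unfolding semi_fatou_def by blast
    moreover have "N x = 1" unfolding x_def using Q .
    ultimately have "(\<lambda>k. N (xs k)) \<longlonglongrightarrow> 1" by simp
    moreover have "1 - e < 1" using e by simp
    ultimately have "eventually (\<lambda>k. 1 - e < N (xs k)) sequentially"
      by (rule order_tendstoD(1))
    then obtain K where K: "\<And>k. k \<ge> K \<Longrightarrow> 1 - e < N (xs k)" unfolding eventually_sequentially by blast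
    show ?thesis using K[of "max K (Suc n)"] by (intro exI[of _ "max K (Suc n)"]) (auto simp: xs_def)
  qed
  have "\<forall>n. \<exists>m. n < m \<and> 1 - inverse (real (Suc n)) < N (\<lambda>w. F w * indicator (B m - B n) w)"
    using R by simp
  then obtain \<phi> where \<phi>: "\<And>n. n < \<phi> n" "\<And>n. 1 - inverse (real (Suc n)) < N (\<lambda>w. F w * indicator (B (\<phi> n) - B n) w)"
    by metis
  define mm where "mm j = (\<phi> ^^ j) 0" for j
  have mmS: "mm (Suc j) = \<phi> (mm j)" for j by (simp add: mm_def)
  have mmsm: "strict_mono mm" unfolding strict_mono_Suc_iff using \<phi>(1) mmS by simp
  have mmge: "j \<le> mm j" for j using mmsm by (rule strict_mono_imp_increasing)
  define C where "C j = B (mm j)" for j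
  have Cm[measurable]: "\<And>j. C j \<in> sets M" unfolding C_def using Bm by blast
  have Cinc: "C i \<subseteq> C j" if "i \<le> j" for i j
    using Binc mmsm that unfolding C_def incseq_def by (simp add: strict_mono_less_eq)
  have DN: "1 - inverse (real (Suc j)) < N (\<lambda>w. F w * indicator (C (Suc j) - C j) w)" for j
  proof -
    have "inverse (real (Suc (mm j))) \<le> inverse (real (Suc j))"
      using mmge[of j] by (simp add: le_imp_inverse_le)
    moreover have "N (\<lambda>w. F w * indicator (C (Suc j) - C j) w) = N (\<lambda>w. F w * indicator (B (\<phi> (mm j)) - B (mm j)) w)"
      by (simp add: C_def mmS)
    ultimately show ?thesis using \<phi>(2)[of "mm j"] by linarith
  qed
  define J where "J w = (LEAST j. w \<in> C (Suc j))" for w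
  have Jm: "J \<in> measurable M (count_space UNIV)" unfolding J_def by measurable
  have Jcomp: "(\<lambda>w. r (J w)) \<in> borel_measurable M" for r :: "nat \<Rightarrow> real"
    by (rule measurable_compose[OF Jm]) simp
  have JD: "J w = j" if "w \<in> C (Suc j) - C j" for w j
    unfolding J_def
  proof (rule Least_equality)
    show "w \<in> C (Suc j)" using that by blast
    fix i assume "w \<in> C (Suc i)"
    show "j \<le> i"
    proof (rule ccontr)
      assume "\<not> j \<le> i"
      then have "C (Suc i) \<subseteq> C j" by (intro Cinc) simp
      then show False using that \<open>w \<in> C (Suc i)\<close> by blast
    qed
  qed
  define idx where "idx w = fst (prod_decode (J w))" for w
  define T where "T s = (\<lambda>w. s (idx w) * F w)" for s :: "nat \<Rightarrow> real"
  have Tm: "T s \<in> borel_measurable M" for s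
  proof -
    have "(\<lambda>w. s (idx w)) \<in> borel_measurable M"
      unfolding idx_def using Jcomp[of "\<lambda>j. s (fst (prod_decode j))"] .
    then show ?thesis unfolding T_def using Fm by measurable
  qed
  have HN: "1 \<le> N (\<lambda>w. F w * (if idx w = k then 1 else 0))" (is "1 \<le> N ?H") for k
  proof -
    have Hm: "?H \<in> borel_measurable M"
    proof -
      have "(\<lambda>w. if idx w = k then 1 else 0::real) \<in> borel_measurable M"
        unfolding idx_def using Jcomp[of "\<lambda>j. if fst (prod_decode j) = k then 1 else 0"] .
      then show ?thesis using Fm by measurable
    qed
    have HX: "?H \<in> X" using bis_ideal'[OF bis Hm FX] Fpos by simp
    have lb: "1 - inverse (real (Suc i)) \<le> N ?H" for i
    proof -
      define j where "j = prod_encode (k, i)"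
      have ij: "i \<le> j" unfolding j_def by (rule le_prod_encode_2)
      have Dm: "(\<lambda>w. F w * indicator (C (Suc j) - C j) w) \<in> borel_measurable M" using Fm by measurable
      have "\<bar>F w * indicator (C (Suc j) - C j) w\<bar> \<le> \<bar>?H w\<bar>" for w
      proof (cases "w \<in> C (Suc j) - C j")
        case True
        then have "idx w = k" using JD[OF True] by (simp add: idx_def j_def)
        then show ?thesis using True by simp
      qed (simp add: Fpos)
      then have "N (\<lambda>w. F w * indicator (C (Suc j) - C j) w) \<le> N ?H"
        using bis_ideal'[OF bis Dm HX] by blast
      moreover have "inverse (real (Suc j)) \<le> inverse (real (Suc i))"
        using ij by (simp add: le_imp_inverse_le)
      ultimately show ?thesis using DN[of j] by linarith
    qed
    show ?thesis
    proof (rule ccontr)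
      assume "\<not> 1 \<le> N ?H"
      then have "0 < 1 - N ?H" by simp
      then obtain i where "inverse (real (Suc i)) < 1 - N ?H" using reals_Archimedean by blast
      then show False using lb[of i] by linarith
    qed
  qed
  have Tprops: "T s \<in> X \<and> N (T s) = (SUP n. \<bar>s n\<bar>)" if bs: "bounded (range s)" for s
  proof -
    have bda: "bdd_above (range (\<lambda>n. \<bar>s n\<bar>))"
    proof -
      obtain a where "\<forall>x\<in>range s. norm x \<le> a" using bs unfolding bounded_iff by blast
      then show ?thesis by (intro bdd_aboveI[of _ a]) auto
    qed
    define K where "K = (SUP n. \<bar>s n\<bar>)"
    have sK: "\<bar>s n\<bar> \<le> K" for n unfolding K_def by (rule cSUP_upper[OF _ bda]) simp
    have K0: "0 \<le> K" using sK[of 0] by simp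
    have KX: "(\<lambda>w. K * F w) \<in> X" using bis_scal[OF bis FX] .
    have "\<bar>T s w\<bar> \<le> \<bar>K * F w\<bar>" for w
      using sK[of "idx w"] Fpos[of w] K0 by (simp add: T_def abs_mult mult_right_mono)
    then have TX: "T s \<in> X" and up: "N (T s) \<le> N (\<lambda>w. K * F w)" using bis_ideal'[OF bis Tm KX] by auto
    have up': "N (T s) \<le> K" using up bis_hom[OF bis FX, of K] NF K0 by simp
    have lo: "\<bar>s k\<bar> \<le> N (T s)" for k
    proof -
      let ?H = "\<lambda>w. F w * (if idx w = k then 1 else 0)"
      have Hm: "?H \<in> borel_measurable M"
      proof -
        have "(\<lambda>w. if idx w = k then 1 else 0::real) \<in> borel_measurable M"
          unfolding idx_def using Jcomp[of "\<lambda>j. if fst (prod_decode j) = k then 1 else 0"] .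
        then show ?thesis using Fm by measurable
      qed
      have HX: "?H \<in> X" using bis_ideal'[OF bis Hm FX] Fpos by simp
      have sHm: "(\<lambda>w. \<bar>s k\<bar> * ?H w) \<in> borel_measurable M" using Hm by measurable
      have "\<bar>\<bar>s k\<bar> * ?H w\<bar> \<le> \<bar>T s w\<bar>" for w
        using Fpos[of w] by (simp add: T_def abs_mult)
      then have "N (\<lambda>w. \<bar>s k\<bar> * ?H w) \<le> N (T s)" using bis_ideal'[OF bis sHm TX] by blast
      moreover have "N (\<lambda>w. \<bar>s k\<bar> * ?H w) = \<bar>s k\<bar> * N ?H" using bis_hom[OF bis HX, of "\<bar>s k\<bar>"] by simp
      moreover have "\<bar>s k\<bar> * 1 \<le> \<bar>s k\<bar> * N ?H" using HN[of k] by (intro mult_left_mono) auto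
      ultimately show ?thesis by simp
    qed
    have "K \<le> N (T s)" unfolding K_def by (rule cSUP_least) (auto intro: lo)
    with up' TX show ?thesis by (simp add: K_def)
  qed
  have "lattice_isometric_linf M X N T"
    unfolding lattice_isometric_linf_def
  proof (intro conjI allI impI)
    fix s t :: "nat \<Rightarrow> real" and c :: real
    show "bounded (range s) \<Longrightarrow> T s \<in> X" using Tprops by blast
    show "bounded (range s) \<Longrightarrow> N (T s) = (SUP n. \<bar>s n\<bar>)" using Tprops by blast
    show "AE w in M. T (\<lambda>n. s n + t n) w = T s w + T t w"
      by (intro AE_I2) (simp add: T_def algebra_simps)
    show "AE w in M. T (\<lambda>n. c * s n) w = c * T s w"
      by (intro AE_I2) (simp add: T_def algebra_simps)
    show "AE w in M. T (\<lambda>n. max (s n) (t n)) w = max (T s w) (T t w)"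
      by (intro AE_I2) (simp add: T_def max_mult_aux[OF Fpos])
  qed
  then show ?thesis by blast
qed


theorem theorem2p1:
  fixes M :: "'a measure" and X :: "('a \<Rightarrow> real) set" and N :: "('a \<Rightarrow> real) \<Rightarrow> real"
  assumes "complete_sigma_finite M"
    and "banach_ideal_space M X N"
    and "semi_fatou M X N"
    and "\<exists>A. is_support M (order_cont_part M X N) A \<and> is_support M X A"
  shows "(\<exists>T. lattice_isometric_linf M X N T) \<longleftrightarrow>
         (\<exists>f\<in>X. N f = 1 \<and> dist_X N f (order_cont_part M X N) = 1)"
proof
  assume "\<exists>T. lattice_isometric_linf M X N T"
  then obtain T where "lattice_isometric_linf M X N T" by blast
  then show "\<exists>f\<in>X. N f = 1 \<and> dist_X N f (order_cont_part M X N) = 1"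
    using fwd[OF assms(2)] by blast
next
  assume "\<exists>f\<in>X. N f = 1 \<and> dist_X N f (order_cont_part M X N) = 1"
  then obtain f where f: "f \<in> X" "N f = 1" "dist_X N f (order_cont_part M X N) = 1" by blast
  obtain A where A: "is_support M (order_cont_part M X N) A" "is_support M X A" using assms(4) by blast
  have sf: "sigma_finite_measure M" using assms(1) unfolding complete_sigma_finite_def by blast
  show "\<exists>T. lattice_isometric_linf M X N T"
    by (rule bwd[OF assms(2) assms(3) sf A f])
qed

end
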